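(* Let $n\ge2$, let $m\ge 3$ be odd, let $\mathcal{A}$ be an $m$th order $n$-dimensional strong Hankel tensor, and let $x=(x_1,\dots,x_n)^\top$ be a Z-eigenvector of $\mathcal{A}$ associated with a Z-eigenvalue $\lambda$. If $\lambda>0$, then $x_i\ge 0$ for all odd $i$; if $\lambda<0$, then $x_i\le0$ for all odd $i$.
   Context: $\mathcal{A}=(a_{i_1\cdots i_m})$ is a Hankel tensor if $a_{i_1\cdots i_m}=v_{i_1+\cdots+i_m-m}$ for some real $v=(v_0,\dots,v_{(n-1)m})^\top$. Let $N=\lceil((n-1)m+2)/2\rceil$; an associated Hankel matrix of $\mathcal{A}$ is the $N\times N$ matrix with $(i,j)$ entry $v_{i+j-2}$, where, if $(n-1)m$ is odd, $v_{2\lceil(n-1)m/2\rceil}$ is an additional (arbitrary) real number. $\mathcal{A}$ is a strong Hankel tensor if an associated Hankel matrix is positive semi-definite. $\mathcal{A}x^{m-1}$ is the vector with $i$th component $\sum_{i_2,\dots,i_m=1}^n a_{ii_2\cdots i_m}x_{i_2}\cdots x_{i_m}$. A real $\lambda$ is a Z-eigenvalue with Z-eigenvector $x\in\mathbb{R}^n$ if $x^\top x=1$ and $\mathcal{A}x^{m-1}=\lambda x$. *)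

theory Defs
  imports "HOL-Analysis.Analysis"
begin

text \<open>An m-th order n-dimensional real tensor is represented as a function on
index lists; only lists of length m with entries in {1..n} are relevant.
Vectors in R^n are functions nat => real, relevant on {1..n}.\<close>

type_synonym tensor = "nat list \<Rightarrow> real"

definition index_lists :: "nat \<Rightarrow> nat \<Rightarrow> nat list set" where
  "index_lists n k = {is. length is = k \<and> set is \<subseteq> {1..n}}"

definition hankel_generated :: "nat \<Rightarrow> nat \<Rightarrow> tensor \<Rightarrow> (nat \<Rightarrow> real) \<Rightarrow> bool" where
  "hankel_generated n m A v \<longleftrightarrow> (\<forall>is \<in> index_lists n m. A is = v (sum_list is - m))"

definition is_hankel_tensor :: "nat \<Rightarrow> nat \<Rightarrow> tensor \<Rightarrow> bool" where
  "is_hankel_tensor n m A \<longleftrightarrow> (\<exists>v. hankel_generated n m A v)"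

definition hankel_size :: "nat \<Rightarrow> nat \<Rightarrow> nat" where
  "hankel_size n m = nat \<lceil>(real ((n - 1) * m) + 2) / 2\<rceil>"

definition psd_matrix :: "nat \<Rightarrow> (nat \<Rightarrow> nat \<Rightarrow> real) \<Rightarrow> bool" where
  "psd_matrix N H \<longleftrightarrow> (\<forall>y :: nat \<Rightarrow> real. (\<Sum>i=1..N. \<Sum>j=1..N. y i * H i j * y j) \<ge> 0)"

text \<open>The generating vector v is only constrained on 0..(n-1)m by the tensor; when
(n-1)m is odd, v at index 2*ceil((n-1)m/2) = (n-1)m+1 is the additional arbitrary
real number.\<close>
definition strong_hankel_tensor :: "nat \<Rightarrow> nat \<Rightarrow> tensor \<Rightarrow> bool" where
  "strong_hankel_tensor n m A \<longleftrightarrow>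
     (\<exists>v. hankel_generated n m A v \<and>
          psd_matrix (hankel_size n m) (\<lambda>i j. v (i + j - 2)))"

definition tensor_apply :: "nat \<Rightarrow> nat \<Rightarrow> tensor \<Rightarrow> (nat \<Rightarrow> real) \<Rightarrow> nat \<Rightarrow> real" where
  "tensor_apply n m A x i = (\<Sum>is \<in> index_lists n (m - 1). A (i # is) * prod_list (map x is))"

definition Z_eigenpair :: "nat \<Rightarrow> nat \<Rightarrow> tensor \<Rightarrow> real \<Rightarrow> (nat \<Rightarrow> real) \<Rightarrow> bool" where
  "Z_eigenpair n m A lam x \<longleftrightarrow>
     (\<Sum>i=1..n. x i ^ 2) = 1 \<and> (\<forall>i\<in>{1..n}. tensor_apply n m A x i = lam * x i)"

end

theory Submission
  imports Defs
begin

lemma len_le_sum: "set xs \<subseteq> {1..n} \<Longrightarrow> length xs \<le> sum_list xs"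
  by (induction xs) auto

lemma sum_le_len: "set xs \<subseteq> {1..n} \<Longrightarrow> sum_list xs \<le> n * length xs"
  by (induction xs) auto

lemma finite_index_lists: "finite (index_lists n k)"
proof -
  have "index_lists n k = {xs. set xs \<subseteq> {1..n} \<and> length xs = k}"
    unfolding index_lists_def by auto
  thus ?thesis using finite_lists_length_eq[of "{1..n}" k] by simp
qed

lemma index_lists_append:
  "index_lists n (a + b) = (\<lambda>(p,q). p @ q) ` (index_lists n a \<times> index_lists n b)"
proof
  show "index_lists n (a + b) \<subseteq> (\<lambda>(p,q). p @ q) ` (index_lists n a \<times> index_lists n b)"
  proof
    fix xs assume "xs \<in> index_lists n (a + b)"
    hence h: "length xs = a + b" "set xs \<subseteq> {1..n}" unfolding index_lists_def by auto
    have "xs = take a xs @ drop a xs" by simp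
    moreover have "take a xs \<in> index_lists n a" "drop a xs \<in> index_lists n b"
      using h unfolding index_lists_def by (auto dest: in_set_takeD in_set_dropD)
    ultimately show "xs \<in> (\<lambda>(p,q). p @ q) ` (index_lists n a \<times> index_lists n b)"
      by (metis (no_types, lifting) SigmaI case_prod_conv image_eqI)
  qed
qed (fastforce simp: index_lists_def)

lemma inj_append: "inj_on (\<lambda>(p,q). p @ q) (index_lists n a \<times> index_lists n b)"
  by (auto simp: inj_on_def index_lists_def)

lemma key:
  assumes hg: "hankel_generated n m A v"
    and psd: "psd_matrix (hankel_size n m) (\<lambda>i j. v (i + j - 2))"
    and mq: "m = 2*q+1" and i: "i \<in> {1..n}" and ir: "i = 2*r+1"
  shows "tensor_apply n m A x i \<ge> 0"
proof -
  define L where "L = index_lists n q"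
  define P where "P as = prod_list (map x as)" for as
  define f where "f as = r + sum_list as - q + 1" for as
  define N where "N = hankel_size n m"
  define y where "y k = (\<Sum>as\<in>L. if f as = k then P as else 0)" for k
  have finL: "finite L" unfolding L_def by (rule finite_index_lists)
  have range: "f as \<in> {1..N}" if "as \<in> L" for as
  proof -
    have s: "set as \<subseteq> {1..n}" "length as = q" using that unfolding L_def index_lists_def by auto
    have "sum_list as \<le> n * q" using sum_le_len[OF s(1)] s(2) by simp
    hence "f as \<le> r + n*q - q + 1" unfolding f_def by simp
    moreover have "2*r \<le> n - 1" using i ir by auto
    moreover have "real (r + n*q - q + 1) \<le> real N"
    proof -
      have "n*q \<ge> q" using i by auto
      hence "r + n*q - q + 1 + q = r + n*q + 1" by linarith
      hence "real (r + n*q - q + 1) + real q = real r + real n * real q + 1"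
        by (metis of_nat_add of_nat_mult of_nat_1)
      hence "real (r + n*q - q + 1) = real r + (real n - 1) * real q + 1"
        by (simp add: algebra_simps)
      also have "... \<le> (real ((n - 1) * m) + 2) / 2"
      proof -
        have n1: "real (n - 1) = real n - 1" using i by (simp add: of_nat_diff)
        have "real ((n - 1) * m) = (real n - 1) * (2 * real q + 1)" unfolding of_nat_mult n1 using mq by simp
        moreover have "2 * real r \<le> real n - 1" using \<open>2*r \<le> n - 1\<close> n1
          by (metis of_nat_le_iff of_nat_mult of_nat_numeral)
        ultimately show ?thesis by (simp add: algebra_simps)
      qed
      also have "... \<le> real N" unfolding N_def hankel_size_def by linarith
      finally show ?thesis .
    qed
    ultimately show ?thesis unfolding f_def by auto
  qed
  have "0 \<le> (\<Sum>k=1..N. \<Sum>l=1..N. y k * v (k + l - 2) * y l)"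
    using psd unfolding psd_matrix_def N_def by blast
  also have "\<dots> = (\<Sum>as\<in>L. \<Sum>bs\<in>L. P as * P bs * v (f as + f bs - 2))"
  proof -
    have "(\<Sum>k=1..N. \<Sum>l=1..N. y k * v (k + l - 2) * y l)
      = (\<Sum>k=1..N. \<Sum>l=1..N. \<Sum>as\<in>L. \<Sum>bs\<in>L.
           (if f as = k then P as else 0) * v (k + l - 2) * (if f bs = l then P bs else 0))"
      unfolding y_def by (simp add: sum_distrib_left sum_distrib_right)
        (rule sum.cong[OF refl], rule sum.cong[OF refl], rule sum.swap)
    also have "\<dots> = (\<Sum>as\<in>L. \<Sum>bs\<in>L. \<Sum>k=1..N. \<Sum>l=1..N.
           (if f as = k then P as else 0) * v (k + l - 2) * (if f bs = l then P bs else 0))"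
      by (simp only: sum.swap[of _ "{1..N}" L])
    also have "\<dots> = (\<Sum>as\<in>L. \<Sum>bs\<in>L. P as * P bs * v (f as + f bs - 2))"
    proof (intro sum.cong refl)
      fix as bs assume a: "as \<in> L" and b: "bs \<in> L"
      have "(\<Sum>k=1..N. \<Sum>l=1..N.
           (if f as = k then P as else 0) * v (k + l - 2) * (if f bs = l then P bs else 0))
         = (\<Sum>k=1..N. if f as = k then (\<Sum>l=1..N. P as * v (k + l - 2) * (if f bs = l then P bs else 0)) else 0)"
        by (intro sum.cong refl) auto
      also have "\<dots> = (\<Sum>l=1..N. P as * v (f as + l - 2) * (if f bs = l then P bs else 0))"
        using range[OF a] by (simp add: sum.delta)
      also have "\<dots> = (\<Sum>l=1..N. if f bs = l then P as * v (f as + l - 2) * P bs else 0)"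
        by (intro sum.cong refl) auto
      also have "\<dots> = P as * P bs * v (f as + f bs - 2)"
        using range[OF b] by (simp add: sum.delta)
      finally show "(\<Sum>k=1..N. \<Sum>l=1..N.
           (if f as = k then P as else 0) * v (k + l - 2) * (if f bs = l then P bs else 0))
         = P as * P bs * v (f as + f bs - 2)" .
    qed
    finally show ?thesis .
  qed
  also have "\<dots> = (\<Sum>(as,bs)\<in>L \<times> L. P (as @ bs) * v (i + sum_list (as @ bs) - m))"
    unfolding sum.cartesian_product[symmetric]
  proof (intro sum.cong refl)
    fix as bs assume a: "as \<in> L" and b: "bs \<in> L"
    have la: "q \<le> sum_list as" using a len_le_sum unfolding L_def index_lists_def by fastforce
    have lb: "q \<le> sum_list bs" using b len_le_sum unfolding L_def index_lists_def by fastforce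
    have "f as + f bs - 2 = i + sum_list (as @ bs) - m"
      unfolding f_def using la lb ir mq by simp
    thus "P as * P bs * v (f as + f bs - 2) = P (as @ bs) * v (i + sum_list (as @ bs) - m)"
      unfolding P_def by simp
  qed
  also have "\<dots> = (\<Sum>js\<in>index_lists n (q + q). P js * v (i + sum_list js - m))"
    unfolding index_lists_append L_def
    by (subst sum.reindex[OF inj_append]) (simp add: case_prod_unfold)
  also have "\<dots> = tensor_apply n m A x i"
    unfolding tensor_apply_def
  proof (intro sum.cong)
    show "index_lists n (q + q) = index_lists n (m - 1)" using mq by (simp add: mult_2)
  next
    fix js assume "js \<in> index_lists n (m - 1)"
    hence "i # js \<in> index_lists n m" using i mq unfolding index_lists_def by auto
    hence "A (i # js) = v (i + sum_list js - m)" using hg unfolding hankel_generated_def by auto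
    thus "P js * v (i + sum_list js - m) = A (i # js) * prod_list (map x js)"
      unfolding P_def by simp
  qed
  finally show ?thesis .
qed

theorem proposition6:
  fixes n m :: nat and A :: tensor and lam :: real and x :: "nat \<Rightarrow> real"
  assumes "n \<ge> 2" and "m \<ge> 3" and "odd m"
    and "strong_hankel_tensor n m A"
    and "Z_eigenpair n m A lam x"
  shows "(lam > 0 \<longrightarrow> (\<forall>i\<in>{1..n}. odd i \<longrightarrow> x i \<ge> 0)) \<and>
         (lam < 0 \<longrightarrow> (\<forall>i\<in>{1..n}. odd i \<longrightarrow> x i \<le> 0))"
proof -
  obtain v where hg: "hankel_generated n m A v"
    and psd: "psd_matrix (hankel_size n m) (\<lambda>i j. v (i + j - 2))"
    using assms(4) unfolding strong_hankel_tensor_def by blast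
  obtain q where mq: "m = 2*q+1" using assms(3) oddE by blast
  have nn: "lam * x i \<ge> 0" if i: "i \<in> {1..n}" "odd i" for i
  proof -
    obtain r where ir: "i = 2*r+1" using i(2) oddE by blast
    have "tensor_apply n m A x i \<ge> 0" by (rule key[OF hg psd mq i(1) ir])
    thus ?thesis using assms(5) i(1) unfolding Z_eigenpair_def by auto
  qed
  show ?thesis
  proof (intro conjI impI ballI)
    fix i assume "lam > 0" "i \<in> {1..n}" "odd i"
    thus "x i \<ge> 0" using nn[of i] by (simp add: zero_le_mult_iff)
  next
    fix i assume "lam < 0" "i \<in> {1..n}" "odd i"
    thus "x i \<le> 0" using nn[of i] by (simp add: zero_le_mult_iff)
  qed
qed

end
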